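(* Let $X,Y$ be compact metric spaces, $(f_n)_{n\ge1}$ a sequence of continuous maps $X\to X$ and $(g_n)_{n\ge1}$ a sequence of continuous maps $Y\to Y$, and suppose there is a continuous surjection $h\colon X\to Y$ with $g_n\circ h=h\circ f_n$ for all $n$ (topological semi-conjugacy). Then $E(Y,g_{1,\infty})$ is a continuous image of $E(X,f_{1,\infty})$. If moreover $h$ is a homeomorphism, then $E(Y,g_{1,\infty})$ and $E(X,f_{1,\infty})$ are topologically isomorphic, i.e. there is a homeomorphism $H\colon E(X,f_{1,\infty})\to E(Y,g_{1,\infty})$ with $H(f_1^p)=g_1^p$ for every $p\in\beta(\mathbb{N})$.
   Context: $\mathbb{N}=\{1,2,\dots\}$, $\beta(\mathbb{N})$ the ultrafilters on $\mathbb{N}$ (principal ones identified with $n\in\mathbb{N}$), $\mathbb{N}^*$ the free ones. For $r\in\mathbb{N}^*$, $r\text{-}\lim_n x_n$ is the unique $y$ with $\{n:x_n\in V\}\in r$ for all neighbourhoods $V$ of $y$. $f_1^n=f_n\circ\cdots\circ f_1$, $f_1^r(x)=r\text{-}\lim_n f_1^n(x)$ for $r\in\mathbb{N}^*$, and $E(X,f_{1,\infty})$ is the closure of $\{f_1^n:n\in\mathbb{N}\}$ in $X^X$ with the pointwise topology (it equals $\{f_1^p:p\in\beta(\mathbb{N})\}$); similarly for $g$. The semigroup operation on these sets is $f_1^p\ast f_1^q:=f_1^{q+p}$, where $q+p=\{A:\{n:\{m:m+n\in A\}\in q\}\in p\}$, so an isomorphism is a homeomorphism compatible with this indexing. *)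

theory Defs
  imports "HOL-Analysis.Analysis"
begin

definition is_ultrafilter :: "'a filter \<Rightarrow> bool" where
  "is_ultrafilter F \<longleftrightarrow> F \<noteq> bot \<and> (\<forall>P. eventually P F \<or> eventually (\<lambda>x. \<not> P x) F)"

text \<open>beta(N) for N = {1,2,...}: ultrafilters on nat concentrated on {n. n >= 1};
  the principal ultrafilter at n is principal {n}.\<close>
definition beta_nat :: "nat filter set" where
  "beta_nat = {p. is_ultrafilter p \<and> eventually (\<lambda>n. 1 \<le> n) p}"

text \<open>f_1^n = f_n o ... o f_1 (f_1^0 = id is auxiliary; f 0 is unused).\<close>
fun iter_comp :: "(nat \<Rightarrow> 'a \<Rightarrow> 'a) \<Rightarrow> nat \<Rightarrow> 'a \<Rightarrow> 'a" where
  "iter_comp f 0 = id"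
| "iter_comp f (Suc n) = f (Suc n) \<circ> iter_comp f n"

text \<open>Pointwise (product) topology on X^X; maps are represented restricted to X.\<close>
definition pw_top :: "'a::topological_space set \<Rightarrow> ('a \<Rightarrow> 'a) topology" where
  "pw_top X = product_topology (\<lambda>_. top_of_set X) X"

definition enveloping :: "'a::topological_space set \<Rightarrow> (nat \<Rightarrow> 'a \<Rightarrow> 'a) \<Rightarrow> ('a \<Rightarrow> 'a) set" where
  "enveloping X f = pw_top X closure_of {restrict (iter_comp f n) X | n. 1 \<le> n}"

definition ulim_map :: "'a::t2_space set \<Rightarrow> (nat \<Rightarrow> 'a \<Rightarrow> 'a) \<Rightarrow> nat filter \<Rightarrow> ('a \<Rightarrow> 'a)" where
  "ulim_map X f p = restrict (\<lambda>x. Lim p (\<lambda>n. iter_comp f n x)) X"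

end

theory Submission
  imports Defs
begin

lemma iter_in:
  assumes "\<And>k. 1 \<le> k \<Longrightarrow> f k ` X \<subseteq> X" and "x \<in> X"
  shows "iter_comp f n x \<in> X"
  using assms by (induction n) auto

lemma iter_conj:
  assumes "\<And>k. 1 \<le> k \<Longrightarrow> f k ` X \<subseteq> X"
    and "\<And>k z. 1 \<le> k \<Longrightarrow> z \<in> X \<Longrightarrow> g k (h z) = h (f k z)" and "x \<in> X"
  shows "iter_comp g n (h x) = h (iter_comp f n x)"
  using assms(3)
proof (induction n)
  case 0 then show ?case by simp
next
  case (Suc n)
  have "iter_comp f n x \<in> X" using iter_in[of f X, OF assms(1) Suc.prems] by blast
  then show ?case using Suc assms(2)[of "Suc n" "iter_comp f n x"] by simp
qed

lemma topspace_pw: "topspace (pw_top X) = (\<Pi>\<^sub>E i\<in>X. X)"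
  unfolding pw_top_def by simp

lemma compact_pw: "compact X \<Longrightarrow> compact_space (pw_top X)"
  unfolding pw_top_def compact_space_product_topology
  by (simp add: compact_space_subtopology)

lemma hausdorff_pw: "Hausdorff_space (pw_top (X::'a::metric_space set))"
  unfolding pw_top_def Hausdorff_space_product_topology
  by (simp add: Hausdorff_space_subtopology)

lemma cont_conj:
  fixes X :: "'a::metric_space set" and Y :: "'b::metric_space set"
  assumes "continuous_on X h" "h ` X \<subseteq> Y" "s ` Y \<subseteq> X"
  shows "continuous_map (pw_top X) (pw_top Y) (\<lambda>\<phi>. restrict (\<lambda>y. h (\<phi> (s y))) Y)"
  unfolding continuous_map_componentwise pw_top_def[of Y]
proof (intro conjI ballI)
  show "(\<lambda>\<phi>. restrict (\<lambda>y. h (\<phi> (s y))) Y) ` topspace (pw_top X) \<subseteq> extensional Y" by auto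
next
  fix k assume k: "k \<in> Y"
  have sk: "s k \<in> X" using k assms(3) by auto
  have "continuous_map (pw_top X) (top_of_set X) (\<lambda>\<phi>. \<phi> (s k))"
    unfolding pw_top_def using continuous_map_product_projection[OF sk] .
  moreover have "continuous_map (top_of_set X) (top_of_set Y) h" using assms by auto
  ultimately have "continuous_map (pw_top X) (top_of_set Y) (\<lambda>\<phi>. h (\<phi> (s k)))"
    using continuous_map_compose[unfolded o_def] by blast
  then show "continuous_map (pw_top X) (top_of_set Y) (\<lambda>\<phi>. restrict (\<lambda>y. h (\<phi> (s y))) Y k)"
    using k by simp
qed

lemma gen_in_top:
  assumes "\<And>n. 1 \<le> n \<Longrightarrow> f n ` X \<subseteq> X"
  shows "{restrict (iter_comp f n) X | n. 1 \<le> n} \<subseteq> topspace (pw_top X)"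
  using iter_in[of f X, OF assms] unfolding topspace_pw by auto

lemma env_image:
  fixes X :: "'a::metric_space set" and Y :: "'b::metric_space set"
  assumes "compact X" 
    and fX: "\<And>n. 1 \<le> n \<Longrightarrow> f n ` X \<subseteq> X"
    and gY: "\<And>n. 1 \<le> n \<Longrightarrow> g n ` Y \<subseteq> Y"
    and cont: "continuous_map (pw_top X) (pw_top Y) \<Phi>"
    and gen: "\<And>n. 1 \<le> n \<Longrightarrow> \<Phi> (restrict (iter_comp f n) X) = restrict (iter_comp g n) Y"
  shows "\<Phi> ` enveloping X f = enveloping Y g"
proof -
  let ?A = "{restrict (iter_comp f n) X | n. 1 \<le> n}"
  let ?B = "{restrict (iter_comp g n) Y | n. 1 \<le> n}"
  have img: "\<Phi> ` ?A = ?B"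
  proof -
    have "\<Phi> ` ?A = (\<lambda>n. \<Phi> (restrict (iter_comp f n) X)) ` {n. 1 \<le> n}" by blast
    also have "\<dots> = (\<lambda>n. restrict (iter_comp g n) Y) ` {n. 1 \<le> n}"
      using gen by (intro image_cong) auto
    also have "\<dots> = ?B" by blast
    finally show ?thesis .
  qed
  have "\<Phi> ` enveloping X f \<subseteq> pw_top Y closure_of (\<Phi> ` ?A)"
    unfolding enveloping_def by (rule continuous_map_image_closure_subset[OF cont])
  then have 1: "\<Phi> ` enveloping X f \<subseteq> enveloping Y g"
    unfolding img enveloping_def[of Y] .
  have "compactin (pw_top X) (enveloping X f)"
    unfolding enveloping_def
    by (rule closedin_compact_space[OF compact_pw[OF assms(1)]]) simp
  then have "compactin (pw_top Y) (\<Phi> ` enveloping X f)" by (rule image_compactin[OF _ cont])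
  then have cl: "closedin (pw_top Y) (\<Phi> ` enveloping X f)"
    by (rule compactin_imp_closedin[OF hausdorff_pw])
  have "?A \<subseteq> enveloping X f" unfolding enveloping_def
    by (rule closure_of_subset[OF gen_in_top[of f X, OF fX]])
  then have "?B \<subseteq> \<Phi> ` enveloping X f" using img by blast
  then have "enveloping Y g \<subseteq> \<Phi> ` enveloping X f"
    unfolding enveloping_def[of Y] by (rule closure_of_minimal[OF _ cl])
  with 1 show ?thesis by blast
qed

lemma ulim_exists:
  fixes s :: "nat \<Rightarrow> 'a::metric_space"
  assumes "compact X" "is_ultrafilter p" "eventually (\<lambda>n. s n \<in> X) p"
  shows "\<exists>l\<in>X. (s \<longlongrightarrow> l) p"
proof -
  let ?F = "filtermap s p"
  have "?F \<noteq> bot" using assms(2) unfolding is_ultrafilter_def by (simp add: filtermap_bot_iff)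
  moreover have "eventually (\<lambda>x. x \<in> X) ?F" using assms(3) by (simp add: eventually_filtermap)
  ultimately obtain l where l: "l \<in> X" "inf (nhds l) ?F \<noteq> bot"
    using assms(1) unfolding compact_filter by blast
  have "(s \<longlongrightarrow> l) p"
    unfolding tendsto_def
  proof (intro allI impI)
    fix S assume S: "open S" "l \<in> S"
    show "eventually (\<lambda>x. s x \<in> S) p"
    proof (rule ccontr)
      assume "\<not> eventually (\<lambda>x. s x \<in> S) p"
      then have "eventually (\<lambda>x. \<not> s x \<in> S) p" using assms(2) unfolding is_ultrafilter_def by blast
      then have e1: "eventually (\<lambda>y. y \<notin> S) ?F" by (simp add: eventually_filtermap)
      have e2: "eventually (\<lambda>y. y \<in> S) (nhds l)" using S eventually_nhds by blast
      have "eventually (\<lambda>_. False) (inf (nhds l) ?F)"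
        unfolding eventually_inf using e1 e2 by blast
      then show False using l(2) by (simp add: eventually_False)
    qed
  qed
  with l show ?thesis by blast
qed

lemma ulim_conj:
  fixes X :: "'a::metric_space set" and Y :: "'b::metric_space set"
  assumes "compact X"
    and fX: "\<And>n. 1 \<le> n \<Longrightarrow> f n ` X \<subseteq> X"
    and "continuous_on X h"
    and conj: "\<And>n x. 1 \<le> n \<Longrightarrow> x \<in> X \<Longrightarrow> g n (h x) = h (f n x)"
    and p: "is_ultrafilter p" and x: "x \<in> X"
  shows "h (Lim p (\<lambda>n. iter_comp f n x)) = Lim p (\<lambda>n. iter_comp g n (h x))"
proof -
  have ev: "eventually (\<lambda>n. iter_comp f n x \<in> X) p" using iter_in[of f X, OF fX x] by simp
  obtain l where l: "l \<in> X" "((\<lambda>n. iter_comp f n x) \<longlongrightarrow> l) p"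
    using ulim_exists[OF assms(1) p ev] by blast
  have nb: "p \<noteq> bot" using p unfolding is_ultrafilter_def by blast
  have "((\<lambda>n. h (iter_comp f n x)) \<longlongrightarrow> h l) p"
    using continuous_on_tendsto_compose[OF assms(3) l(2) l(1) ev] .
  then have "((\<lambda>n. iter_comp g n (h x)) \<longlongrightarrow> h l) p"
    using iter_conj[of f X g h, OF fX conj x] by simp
  then have "Lim p (\<lambda>n. iter_comp g n (h x)) = h l" using nb tendsto_Lim by blast
  moreover have "Lim p (\<lambda>n. iter_comp f n x) = l" using nb tendsto_Lim l(2) by blast
  ultimately show ?thesis by simp
qed

theorem theorem3p16:
  fixes X :: "'a::metric_space set" and Y :: "'b::metric_space set"
    and f :: "nat \<Rightarrow> 'a \<Rightarrow> 'a" and g :: "nat \<Rightarrow> 'b \<Rightarrow> 'b" and h :: "'a \<Rightarrow> 'b"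
  assumes "compact X" and "compact Y"
    and "\<And>n. 1 \<le> n \<Longrightarrow> continuous_on X (f n) \<and> f n ` X \<subseteq> X"
    and "\<And>n. 1 \<le> n \<Longrightarrow> continuous_on Y (g n) \<and> g n ` Y \<subseteq> Y"
    and "continuous_on X h" and "h ` X = Y"
    and "\<And>n x. 1 \<le> n \<Longrightarrow> x \<in> X \<Longrightarrow> g n (h x) = h (f n x)"
  shows "(\<exists>\<Phi>. continuous_map (subtopology (pw_top X) (enveloping X f))
                               (subtopology (pw_top Y) (enveloping Y g)) \<Phi>
             \<and> \<Phi> ` enveloping X f = enveloping Y g)
       \<and> ((\<exists>h'. homeomorphism X Y h h') \<longrightarrow>
          (\<exists>H. homeomorphic_map (subtopology (pw_top X) (enveloping X f))
                                 (subtopology (pw_top Y) (enveloping Y g)) H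
               \<and> (\<forall>p\<in>beta_nat. H (ulim_map X f p) = ulim_map Y g p)))"
proof
  have fX: "\<And>n. 1 \<le> n \<Longrightarrow> f n ` X \<subseteq> X" using assms(3) by blast
  have gY: "\<And>n. 1 \<le> n \<Longrightarrow> g n ` Y \<subseteq> Y" using assms(4) by blast
  define s where "s y = (SOME x. x \<in> X \<and> h x = y)" for y
  have s: "s y \<in> X \<and> h (s y) = y" if "y \<in> Y" for y
    unfolding s_def by (rule someI_ex) (use that assms(6) in blast)
  define \<Phi> where "\<Phi> \<phi> = restrict (\<lambda>y. h (\<phi> (s y))) Y" for \<phi> :: "'a \<Rightarrow> 'a"
  have cont: "continuous_map (pw_top X) (pw_top Y) \<Phi>"
    unfolding \<Phi>_def using cont_conj[OF assms(5)] assms(6) s by blast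
  have gen: "\<Phi> (restrict (iter_comp f n) X) = restrict (iter_comp g n) Y" if "1 \<le> n" for n
  proof
    fix y show "\<Phi> (restrict (iter_comp f n) X) y = restrict (iter_comp g n) Y y"
      unfolding \<Phi>_def using s[of y] iter_conj[of f X g h, OF fX assms(7), of "s y" n] by auto
  qed
  have im: "\<Phi> ` enveloping X f = enveloping Y g"
    using env_image[where X=X and f=f and Y=Y and g=g, OF assms(1) fX gY cont gen] by blast
  show "\<exists>\<Phi>. continuous_map (subtopology (pw_top X) (enveloping X f))
                               (subtopology (pw_top Y) (enveloping Y g)) \<Phi>
             \<and> \<Phi> ` enveloping X f = enveloping Y g"
    by (intro exI[of _ \<Phi>] conjI im continuous_map_into_subtopology
        continuous_map_from_subtopology cont) (use im in auto)
next
  show "(\<exists>h'. homeomorphism X Y h h') \<longrightarrow>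
          (\<exists>H. homeomorphic_map (subtopology (pw_top X) (enveloping X f))
                                 (subtopology (pw_top Y) (enveloping Y g)) H
               \<and> (\<forall>p\<in>beta_nat. H (ulim_map X f p) = ulim_map Y g p))"
  proof
    assume "\<exists>h'. homeomorphism X Y h h'"
    then obtain h' where hm: "homeomorphism X Y h h'" by blast
    have h'Y: "h' ` Y = X" and h'c: "continuous_on Y h'"
      and hh': "\<And>y. y \<in> Y \<Longrightarrow> h (h' y) = y" and h'h: "\<And>x. x \<in> X \<Longrightarrow> h' (h x) = x"
      using hm unfolding homeomorphism_def by auto
    have fX: "\<And>n. 1 \<le> n \<Longrightarrow> f n ` X \<subseteq> X" using assms(3) by blast
    have gY: "\<And>n. 1 \<le> n \<Longrightarrow> g n ` Y \<subseteq> Y" using assms(4) by blast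
    have conj': "f n (h' y) = h' (g n y)" if "1 \<le> n" "y \<in> Y" for n y
    proof -
      have "h' y \<in> X" using h'Y that by auto
      then have "f n (h' y) \<in> X" using fX[OF that(1)] by auto
      then have "h' (h (f n (h' y))) = f n (h' y)" using h'h by blast
      moreover have "h (f n (h' y)) = g n y" using assms(7)[OF that(1) \<open>h' y \<in> X\<close>] hh' that by simp
      ultimately show ?thesis by simp
    qed
    define H where "H \<phi> = restrict (\<lambda>y. h (\<phi> (h' y))) Y" for \<phi> :: "'a \<Rightarrow> 'a"
    define H' where "H' \<psi> = restrict (\<lambda>x. h' (\<psi> (h x))) X" for \<psi> :: "'b \<Rightarrow> 'b"
    have cH: "continuous_map (pw_top X) (pw_top Y) H"
      unfolding H_def using cont_conj[OF assms(5)] assms(6) h'Y by blast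
    have cH': "continuous_map (pw_top Y) (pw_top X) H'"
      unfolding H'_def using cont_conj[OF h'c] assms(6) h'Y by blast
    have genH: "H (restrict (iter_comp f n) X) = restrict (iter_comp g n) Y" if "1 \<le> n" for n
    proof
      fix y show "H (restrict (iter_comp f n) X) y = restrict (iter_comp g n) Y y"
      proof (cases "y \<in> Y")
        case True
        then have hy: "h' y \<in> X" using h'Y by auto
        have "iter_comp g n (h (h' y)) = h (iter_comp f n (h' y))"
          by (rule iter_conj[of f X g h, OF fX assms(7) hy])
        then show ?thesis unfolding H_def using True hy hh' by simp
      qed (simp add: H_def)
    qed
    have genH': "H' (restrict (iter_comp g n) Y) = restrict (iter_comp f n) X" if "1 \<le> n" for n
    proof
      fix x show "H' (restrict (iter_comp g n) Y) x = restrict (iter_comp f n) X x"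
      proof (cases "x \<in> X")
        case True
        then have hx: "h x \<in> Y" using assms(6) by auto
        have "iter_comp f n (h' (h x)) = h' (iter_comp g n (h x))"
          by (rule iter_conj[of g Y f h', OF gY conj' hx])
        then show ?thesis unfolding H'_def using True hx h'h by simp
      qed (simp add: H'_def)
    qed
    have imH: "H ` enveloping X f = enveloping Y g"
      using env_image[where X=X and f=f and Y=Y and g=g, OF assms(1) fX gY cH genH] by blast
    have imH': "H' ` enveloping Y g = enveloping X f"
      using env_image[where X=Y and f=g and Y=X and g=f, OF assms(2) gY fX cH' genH'] by blast
    have inv1: "H' (H \<phi>) = \<phi>" if "\<phi> \<in> topspace (pw_top X)" for \<phi>
    proof
      fix x show "H' (H \<phi>) x = \<phi> x"
        using that unfolding H_def H'_def topspace_pw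
        by (cases "x \<in> X") (auto simp: h'h PiE_iff extensional_def assms(6)[symmetric])
    qed
    have inv2: "H (H' \<psi>) = \<psi>" if "\<psi> \<in> topspace (pw_top Y)" for \<psi>
    proof
      fix y show "H (H' \<psi>) y = \<psi> y"
        using that unfolding H_def H'_def topspace_pw
        by (cases "y \<in> Y") (auto simp: hh' PiE_iff extensional_def h'Y[symmetric])
    qed
    have "homeomorphic_maps (subtopology (pw_top X) (enveloping X f))
                                 (subtopology (pw_top Y) (enveloping Y g)) H H'"
      unfolding homeomorphic_maps_def
      by (intro conjI continuous_map_into_subtopology continuous_map_from_subtopology cH cH')
         (use imH imH' inv1 inv2 in auto)
    then have hom: "homeomorphic_map (subtopology (pw_top X) (enveloping X f))
                                 (subtopology (pw_top Y) (enveloping Y g)) H"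
      by (rule homeomorphic_maps_imp_map)
    have "H (ulim_map X f p) = ulim_map Y g p" if p: "p \<in> beta_nat" for p
    proof
      have pu: "is_ultrafilter p" using p unfolding beta_nat_def by blast
      fix y show "H (ulim_map X f p) y = ulim_map Y g p y"
      proof (cases "y \<in> Y")
        case True
        have "h' y \<in> X" using True h'Y by auto
        then show ?thesis unfolding H_def ulim_map_def
          using ulim_conj[where X=X and f=f and h=h and g=g, OF assms(1) fX assms(5) assms(7) pu \<open>h' y \<in> X\<close>] True hh' by simp
      qed (simp add: H_def ulim_map_def)
    qed
    with hom show "\<exists>H. homeomorphic_map (subtopology (pw_top X) (enveloping X f))
                                 (subtopology (pw_top Y) (enveloping Y g)) H
               \<and> (\<forall>p\<in>beta_nat. H (ulim_map X f p) = ulim_map Y g p)" by blast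
  qed
qed

end
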